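(* Let $\mathcal A=\{0,1\}^d\subset\mathbb R^d$ be the vertex set of the unit cube. Then $\mathrm{PWidth}(\mathcal A)=1/\sqrt d$.
   Context: Euclidean norm and inner product. For a finite set $\mathcal B\subseteq\mathbb R^d$ and $x\in\mathrm{conv}(\mathcal B)$, $\mathcal S_x(\mathcal B)$ is the family of subsets $S\subseteq\mathcal B$ such that $x$ is a proper convex combination of all elements of $S$ (all coefficients positive). For $r\ne0$, $\mathrm{PdirW}(\mathcal B,r,x):=\min_{S\in\mathcal S_x(\mathcal B)}\max_{s\in\mathcal B,\,v\in S}\langle r/\|r\|,s-v\rangle$. The pyramidal width is $\mathrm{PWidth}(\mathcal A):=\inf\{\mathrm{PdirW}(\mathcal K\cap\mathcal A,r,x)\}$ over all nonempty faces $\mathcal K$ of $\mathrm{conv}(\mathcal A)$ (including $\mathrm{conv}(\mathcal A)$ itself), all $x\in\mathcal K$, and all $r\in\mathrm{cone}(\mathcal K-x)\setminus\{0\}$, where $\mathrm{cone}(\mathcal K-x)=\{\sum_i\lambda_i(y_i-x):\lambda_i\ge0,\ y_i\in\mathcal K\}$. *)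

theory Defs
  imports "HOL-Analysis.Analysis"
begin

definition proper_supports :: "'a::euclidean_space set \<Rightarrow> 'a \<Rightarrow> 'a set set" where
  "proper_supports B x = {S. S \<subseteq> B \<and> (\<exists>c::'a \<Rightarrow> real.
      (\<forall>s\<in>S. c s > 0) \<and> sum c S = 1 \<and> (\<Sum>s\<in>S. c s *\<^sub>R s) = x)}"

definition PdirW :: "'a::euclidean_space set \<Rightarrow> 'a \<Rightarrow> 'a \<Rightarrow> real" where
  "PdirW B r x = Inf ((\<lambda>S. Sup {(r /\<^sub>R norm r) \<bullet> (s - v) | s v. s \<in> B \<and> v \<in> S})
                       ` proper_supports B x)"

definition cone_diff :: "'a::euclidean_space set \<Rightarrow> 'a \<Rightarrow> 'a set" where
  "cone_diff K x = {z. \<exists>F (l::'a \<Rightarrow> real). finite F \<and> F \<subseteq> K \<and> (\<forall>y\<in>F. l y \<ge> 0)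
                        \<and> z = (\<Sum>y\<in>F. l y *\<^sub>R (y - x))}"

definition PWidth :: "'a::euclidean_space set \<Rightarrow> real" where
  "PWidth A = Inf {PdirW (K \<inter> A) r x | K x r.
      K face_of convex hull A \<and> K \<noteq> {} \<and> x \<in> K \<and> r \<in> cone_diff K x \<and> r \<noteq> 0}"

definition unit_cube_vertices :: "'a::euclidean_space set" where
  "unit_cube_vertices = {v. \<forall>i\<in>Basis. v \<bullet> i = 0 \<or> v \<bullet> i = 1}"

end

theory Submission
  imports Defs
begin

lemma hullA: "convex hull (unit_cube_vertices::'a::euclidean_space set) = cbox 0 One"
  using unit_interval_convex_hull[symmetric] unfolding unit_cube_vertices_def by simp

lemma finA: "finite (unit_cube_vertices::'a::euclidean_space set)"
proof (rule finite_subset)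
  show "finite ((\<lambda>S. \<Sum>i\<in>Basis. (if i \<in> S then 1 else 0) *\<^sub>R i) ` Pow (Basis::'a set))"
    using finite_Basis by blast
  show "unit_cube_vertices \<subseteq> (\<lambda>S. \<Sum>i\<in>Basis. (if i\<in>S then 1 else 0) *\<^sub>R i) ` Pow (Basis::'a set)"
  proof
    fix x :: 'a
    assume "x \<in> unit_cube_vertices"
    then have x: "\<forall>i\<in>Basis. x \<bullet> i = 0 \<or> x \<bullet> i = 1" by (simp add: unit_cube_vertices_def)
    show "x \<in> (\<lambda>S. \<Sum>i\<in>Basis. (if i\<in>S then 1 else 0) *\<^sub>R i) ` Pow Basis"
      apply (rule image_eqI[where x="{i. i \<in> Basis \<and> x\<bullet>i = 1}"])
      using x
      by (subst euclidean_eq_iff, auto)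
  qed
qed

lemma num1:
  fixes a t \<alpha> :: real
  assumes "a = 0 \<or> a = 1" "0 \<le> t" "t \<le> 1" "0 < \<alpha>" "\<alpha> \<le> 1/2"
  shows "0 \<le> (1/(1-\<alpha>)) * ((a+t)/2 - \<alpha> * a) \<and> (1/(1-\<alpha>)) * ((a+t)/2 - \<alpha> * a) \<le> 1"
  using assms by (auto simp: field_simps)

lemma num2:
  fixes a t \<alpha> :: real
  assumes "a = 0 \<or> a = 1" "0 \<le> t" "t \<le> 1" "\<alpha> = \<bar>t - a\<bar>/2" "0 < \<alpha>"
  shows "0 \<le> (1/(1-\<alpha>)) * ((a+t)/2 - \<alpha> * (a + (1 - 2*a))) \<and> (1/(1-\<alpha>)) * ((a+t)/2 - \<alpha> * (a + (1 - 2*a))) \<le> 1"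
  using assms by (auto simp: field_simps)

lemma flip:
  fixes K :: "'a::euclidean_space set"
  assumes K: "K face_of cbox 0 One" and v: "v \<in> K" "v \<in> unit_cube_vertices"
    and z: "z \<in> K" and i: "i \<in> Basis" "z \<bullet> i \<noteq> v \<bullet> i"
  shows "v + (1 - 2*(v \<bullet> i)) *\<^sub>R i \<in> K"
proof -
  define w where "w = v + (1 - 2*(v \<bullet> i)) *\<^sub>R i"
  define \<alpha> where "\<alpha> = \<bar>z \<bullet> i - v \<bullet> i\<bar>/2"
  define p where "p = (1/2) *\<^sub>R v + (1/2) *\<^sub>R z"
  define q where "q = (1/(1-\<alpha>)) *\<^sub>R (p - \<alpha> *\<^sub>R w)"
  have KC: "K \<subseteq> cbox 0 One" using K face_of_imp_subset by blast
  have zb: "\<forall>j\<in>Basis. 0 \<le> z\<bullet>j \<and> z\<bullet>j \<le> 1" using z KC by (auto simp: mem_box)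
  have vb: "\<forall>j\<in>Basis. v\<bullet>j = 0 \<or> v\<bullet>j = 1" using v(2) unfolding unit_cube_vertices_def by simp
  have a0: "0 < \<alpha>" using i unfolding \<alpha>_def by auto
  have a1: "\<alpha> \<le> 1/2" using zb vb i unfolding \<alpha>_def by auto
  have pK: "p \<in> K" unfolding p_def
    by (rule convexD[OF face_of_imp_convex[OF K] v(1) z]) auto
  have wC: "w \<in> cbox 0 One"
    unfolding mem_box w_def using vb i by (auto simp: inner_simps inner_Basis)
  have an: "1 - \<alpha> \<noteq> 0" "2 - \<alpha>*2 \<noteq> 0" using a1 by auto
  have qC: "q \<in> cbox 0 One"
    unfolding mem_box
  proof (intro ballI)
    fix j :: 'a assume j: "j \<in> Basis"
    have qj: "q \<bullet> j = (1/(1-\<alpha>)) * (p \<bullet> j - \<alpha> * (w \<bullet> j))"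
      unfolding q_def by (simp add: inner_simps)
    have pj: "p \<bullet> j = (v\<bullet>j + z\<bullet>j)/2" unfolding p_def by (simp add: inner_simps)
    have wj: "w \<bullet> j = v\<bullet>j + (if j = i then 1 - 2*(v\<bullet>i) else 0)"
      unfolding w_def using i j by (simp add: inner_simps inner_Basis)
    show "0 \<bullet> j \<le> q \<bullet> j \<and> q \<bullet> j \<le> One \<bullet> j"
    proof (cases "j = i")
      case True
      have "q \<bullet> j = (1/(1-\<alpha>)) * ((v\<bullet>i + z\<bullet>i)/2 - \<alpha> * (v\<bullet>i + (1 - 2*(v\<bullet>i))))"
        using True qj pj wj by simp
      then show ?thesis using num2[of "v\<bullet>i" "z\<bullet>i" \<alpha>] vb zb i a0 True j \<alpha>_def by auto
    next
      case False
      have "q \<bullet> j = (1/(1-\<alpha>)) * ((v\<bullet>j + z\<bullet>j)/2 - \<alpha> * (v\<bullet>j))"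
        using False qj pj wj by simp
      then show ?thesis using num1[of "v\<bullet>j" "z\<bullet>j" \<alpha>] vb zb a0 a1 j by auto
    qed
  qed
  have eq: "p = (1-\<alpha>) *\<^sub>R q + \<alpha> *\<^sub>R w"
  proof -
    have "(1-\<alpha>) *\<^sub>R q = p - \<alpha> *\<^sub>R w" using an unfolding q_def by simp
    then show ?thesis by (simp add: algebra_simps)
  qed
  show ?thesis
  proof (cases "q = w")
    case True
    then have "p = w" using eq by (simp add: algebra_simps)
    then show ?thesis using pK w_def by simp
  next
    case False
    then have "p \<in> open_segment q w" unfolding in_segment using eq a0 a1 by auto
    then show ?thesis using face_ofD[OF K _ qC wC pK] w_def by blast
  qed
qed

lemma norm_bound:
  fixes r :: "'a::euclidean_space"
  assumes i: "i \<in> Basis" "\<forall>j\<in>Basis. \<bar>r\<bullet>j\<bar> \<le> \<bar>r\<bullet>i\<bar>"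
  shows "norm r \<le> sqrt (real DIM('a)) * \<bar>r\<bullet>i\<bar>"
proof -
  have "norm r = sqrt (\<Sum>j\<in>Basis. (r\<bullet>j) * (r\<bullet>j))"
    by (metis euclidean_inner norm_eq_sqrt_inner)
  also have "\<dots> \<le> sqrt (\<Sum>j\<in>(Basis::'a set). \<bar>r\<bullet>i\<bar> * \<bar>r\<bullet>i\<bar>)"
  proof (rule real_sqrt_le_mono, rule sum_mono)
    fix j :: 'a assume "j \<in> Basis"
    then have "\<bar>r\<bullet>j\<bar> \<le> \<bar>r\<bullet>i\<bar>" using i by auto
    then have "\<bar>r\<bullet>j\<bar> * \<bar>r\<bullet>j\<bar> \<le> \<bar>r\<bullet>i\<bar> * \<bar>r\<bullet>i\<bar>" by (meson abs_ge_zero mult_mono)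
    then show "(r\<bullet>j) * (r\<bullet>j) \<le> \<bar>r\<bullet>i\<bar> * \<bar>r\<bullet>i\<bar>" by (metis abs_mult_self_eq)
  qed
  also have "\<dots> = sqrt (real DIM('a)) * \<bar>r\<bullet>i\<bar>"
    by (simp add: real_sqrt_mult)
  finally show ?thesis .
qed

lemma lower:
  fixes K :: "'a::euclidean_space set"
  assumes K: "K face_of convex hull unit_cube_vertices" and x: "x \<in> K"
    and r: "r \<in> cone_diff K x" "r \<noteq> 0" and S: "S \<in> proper_supports (K \<inter> unit_cube_vertices) x"
  shows "1 / sqrt (real DIM('a)) \<le> Sup {(r /\<^sub>R norm r) \<bullet> (s - v) | s v. s \<in> K \<inter> unit_cube_vertices \<and> v \<in> S}"
proof -
  let ?A = "unit_cube_vertices :: 'a set"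
  let ?T = "{(r /\<^sub>R norm r) \<bullet> (s - v) | s v. s \<in> K \<inter> ?A \<and> v \<in> S}"
  have KC: "K face_of cbox 0 One" using K hullA by metis
  have KC': "K \<subseteq> cbox 0 One" using KC face_of_imp_subset by blast
  obtain c where SB: "S \<subseteq> K \<inter> ?A" and c: "\<forall>s\<in>S. c s > 0" "sum c S = 1" "(\<Sum>s\<in>S. c s *\<^sub>R s) = x"
    using S unfolding proper_supports_def by blast
  have finS: "finite S" using SB finA finite_subset by blast
  obtain F l where F: "finite F" "F \<subseteq> K" "\<forall>y\<in>F. l y \<ge> 0" "r = (\<Sum>y\<in>F. l y *\<^sub>R (y - x))"
    using r(1) unfolding cone_diff_def by blast
  have "\<exists>m\<in>(\<lambda>j. \<bar>r\<bullet>j\<bar>) ` (Basis::'a set). \<forall>t\<in>(\<lambda>j. \<bar>r\<bullet>j\<bar>) ` Basis. t \<le> m"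
    by (intro bexI[of _ "Max ((\<lambda>j. \<bar>r\<bullet>j\<bar>) ` Basis)"]) (auto intro: Max_ge Max_in)
  then obtain i where i: "i \<in> Basis" "\<forall>j\<in>Basis. \<bar>r\<bullet>j\<bar> \<le> \<bar>r\<bullet>i\<bar>" by auto
  have ri: "\<bar>r\<bullet>i\<bar> > 0"
  proof (rule ccontr)
    assume "\<not> \<bar>r\<bullet>i\<bar> > 0"
    then have "\<forall>j\<in>Basis. r\<bullet>j = 0" using i by force
    then have "r = 0" by (simp add: euclidean_all_zero_iff)
    then show False using r(2) by simp
  qed
  have nr: "norm r \<le> sqrt (real DIM('a)) * \<bar>r\<bullet>i\<bar>" by (rule norm_bound[OF i])
  have bdd: "bdd_above ?T"
  proof (rule bdd_above_mono)
    show "bdd_above ((\<lambda>(s,v). (r /\<^sub>R norm r) \<bullet> (s - v)) ` (?A \<times> ?A))"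
      using finA by (intro bdd_above_finite) auto
    show "?T \<subseteq> (\<lambda>(s,v). (r /\<^sub>R norm r) \<bullet> (s - v)) ` (?A \<times> ?A)" using SB by force
  qed
  have key: "\<exists>s v. s \<in> K \<inter> ?A \<and> v \<in> S \<and> r \<bullet> (s - v) = \<bar>r\<bullet>i\<bar>"
  proof -
    have ri_eq: "r\<bullet>i = (\<Sum>y\<in>F. l y * (y\<bullet>i - x\<bullet>i))"
      using F(4) by (simp add: inner_sum_left inner_simps)
    have xi: "x\<bullet>i = (\<Sum>v\<in>S. c v * (v\<bullet>i))"
      using c(3) by (auto simp: inner_sum_left)
    have xb: "0 \<le> x\<bullet>i" "x\<bullet>i \<le> 1" using x KC' i(1) by (auto simp: mem_box)
    have yb: "\<forall>y\<in>F. 0 \<le> y\<bullet>i \<and> y\<bullet>i \<le> 1" using F(2) KC' i(1) by (auto simp: mem_box)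
    have Sb: "\<forall>v\<in>S. v\<bullet>i = 0 \<or> v\<bullet>i = 1" using SB i(1) by (auto simp: unit_cube_vertices_def)
    have "\<exists>v\<in>S. \<exists>y\<in>F. y\<bullet>i \<noteq> v\<bullet>i \<and> (1 - 2*(v\<bullet>i)) * (r\<bullet>i) = \<bar>r\<bullet>i\<bar>"
    proof (cases "r\<bullet>i > 0")
      case True
      obtain y where y: "y \<in> F" "y\<bullet>i > x\<bullet>i"
      proof (rule ccontr)
        assume "\<not> thesis"
        then have "\<forall>y\<in>F. y\<bullet>i \<le> x\<bullet>i" using that by force
        then have "(\<Sum>y\<in>F. l y * (y\<bullet>i - x\<bullet>i)) \<le> 0"
          using F(3) by (intro sum_nonpos) (simp add: mult_nonneg_nonpos)
        then show False using True ri_eq by simp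
      qed
      obtain v where v: "v \<in> S" "v\<bullet>i = 0"
      proof (rule ccontr)
        assume "\<not> thesis"
        then have "\<forall>v\<in>S. v\<bullet>i = 1" using that Sb by blast
        then have "x\<bullet>i = sum c S" using xi by simp
        then show False using c(2) y yb by force
      qed
      show ?thesis using v y xb True by (intro bexI[OF _ v(1)] bexI[OF _ y(1)]) auto
    next
      case False
      then have neg: "r\<bullet>i < 0" using ri by auto
      obtain y where y: "y \<in> F" "y\<bullet>i < x\<bullet>i"
      proof (rule ccontr)
        assume "\<not> thesis"
        then have "\<forall>y\<in>F. y\<bullet>i \<ge> x\<bullet>i" using that by force
        then have "(\<Sum>y\<in>F. l y * (y\<bullet>i - x\<bullet>i)) \<ge> 0"
          using F(3) by (intro sum_nonneg) simp
        then show False using neg ri_eq by simp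
      qed
      obtain v where v: "v \<in> S" "v\<bullet>i = 1"
      proof (rule ccontr)
        assume "\<not> thesis"
        then have "\<forall>v\<in>S. v\<bullet>i = 0" using that Sb by blast
        then have "x\<bullet>i = 0" using xi by simp
        then show False using y yb by force
      qed
      show ?thesis using v y xb neg by (intro bexI[OF _ v(1)] bexI[OF _ y(1)]) auto
    qed
    then obtain v y where v: "v \<in> S" "y \<in> F" "y\<bullet>i \<noteq> v\<bullet>i" "(1 - 2*(v\<bullet>i)) * (r\<bullet>i) = \<bar>r\<bullet>i\<bar>"
      by blast
    define s where "s = v + (1 - 2*(v\<bullet>i)) *\<^sub>R i"
    have vKA: "v \<in> K" "v \<in> ?A" using v(1) SB by auto
    have sK: "s \<in> K" unfolding s_def using flip[OF KC vKA _ i(1) v(3)] v(2) F(2) by blast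
    have sA: "s \<in> ?A"
      using vKA(2) i(1) unfolding unit_cube_vertices_def s_def
      by (auto simp: inner_simps inner_Basis)
    have "r \<bullet> (s - v) = \<bar>r\<bullet>i\<bar>" unfolding s_def using v(4) by (simp add: inner_simps mult.commute)
    then show ?thesis using sK sA v(1) by blast
  qed
  then obtain s v where sv: "s \<in> K \<inter> ?A" "v \<in> S" "r \<bullet> (s - v) = \<bar>r\<bullet>i\<bar>" by blast
  have npos: "norm r > 0" using r(2) by simp
  have "1 / sqrt (real DIM('a)) = \<bar>r\<bullet>i\<bar> / (sqrt (real DIM('a)) * \<bar>r\<bullet>i\<bar>)"
    using ri by simp
  also have "\<dots> \<le> \<bar>r\<bullet>i\<bar> / norm r"
    using ri npos nr by (intro divide_left_mono) auto
  also have "\<dots> = (r \<bullet> (s - v)) / norm r" using sv(3) by simp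
  also have "\<dots> = (r /\<^sub>R norm r) \<bullet> (s - v)"
    by (metis inner_scaleR_left divide_inverse_commute)
  also have "\<dots> \<le> Sup ?T" using sv bdd by (intro cSup_upper) blast+
  finally show ?thesis .
qed

lemma supports_ne:
  fixes K :: "'a::euclidean_space set"
  assumes K: "K face_of convex hull unit_cube_vertices" and x: "x \<in> K"
  shows "proper_supports (K \<inter> unit_cube_vertices) x \<noteq> {}"
proof -
  let ?A = "unit_cube_vertices :: 'a set"
  obtain S' where S': "S' \<subseteq> ?A" "K = convex hull S'"
    using face_of_convex_hull_subset[OF finite_imp_compact[OF finA] K] by blast
  have "S' \<subseteq> K" unfolding S'(2) by (rule hull_subset)
  then have "S' \<subseteq> K \<inter> ?A" using S'(1) by blast
  then have h: "convex hull S' \<subseteq> convex hull (K \<inter> ?A)" by (rule hull_mono)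
  have "x \<in> convex hull S'" using x S'(2) by simp
  then have "x \<in> convex hull (K \<inter> ?A)" using h by (rule subsetD[rotated])
  moreover have finB: "finite (K \<inter> ?A)" using finA by blast
  ultimately obtain u where u: "\<forall>y\<in>K \<inter> ?A. 0 \<le> u y" "sum u (K \<inter> ?A) = 1"
      "(\<Sum>y\<in>K \<inter> ?A. u y *\<^sub>R y) = x"
    using convex_hull_finite[OF finB] by blast
  define S where "S = {y \<in> K \<inter> ?A. u y \<noteq> 0}"
  have "sum u S = sum u (K \<inter> ?A)"
    unfolding S_def using finB by (intro sum.mono_neutral_left) auto
  moreover have "(\<Sum>y\<in>S. u y *\<^sub>R y) = (\<Sum>y\<in>K \<inter> ?A. u y *\<^sub>R y)"
    unfolding S_def using finB by (intro sum.mono_neutral_left) auto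
  moreover have "\<forall>s\<in>S. u s > 0" using u(1) unfolding S_def by force
  moreover have "S \<subseteq> K \<inter> ?A" unfolding S_def by blast
  ultimately have "S \<in> proper_supports (K \<inter> ?A) x"
    unfolding proper_supports_def using u(2,3) by auto
  then show ?thesis by blast
qed

lemma PdirW_lower:
  fixes K :: "'a::euclidean_space set"
  assumes K: "K face_of convex hull unit_cube_vertices" and x: "x \<in> K"
    and r: "r \<in> cone_diff K x" "r \<noteq> 0"
  shows "1 / sqrt (real DIM('a)) \<le> PdirW (K \<inter> unit_cube_vertices) r x"
  unfolding PdirW_def
proof (rule cInf_greatest)
  show "(\<lambda>S. Sup {(r /\<^sub>R norm r) \<bullet> (s - v) |s v. s \<in> K \<inter> unit_cube_vertices \<and> v \<in> S}) ` proper_supports (K \<inter> unit_cube_vertices) x \<noteq> {}"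
    using supports_ne[OF K x] by blast
  fix t assume "t \<in> (\<lambda>S. Sup {(r /\<^sub>R norm r) \<bullet> (s - v) |s v. s \<in> K \<inter> unit_cube_vertices \<and> v \<in> S}) ` proper_supports (K \<inter> unit_cube_vertices) x"
  then obtain S where "S \<in> proper_supports (K \<inter> unit_cube_vertices) x"
    "t = Sup {(r /\<^sub>R norm r) \<bullet> (s - v) |s v. s \<in> K \<inter> unit_cube_vertices \<and> v \<in> S}" by blast
  then show "1 / sqrt (real DIM('a)) \<le> t" using lower[OF K x r] by simp
qed

lemma inner_One_Basis: "j \<in> Basis \<Longrightarrow> j \<bullet> (One::'a::euclidean_space) = 1"
  by (metis inner_commute inner_sum_Basis)

lemma norm_One': "norm (One::'a::euclidean_space) = sqrt (real DIM('a))"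
proof -
  have "(One::'a) \<bullet> One = (\<Sum>b\<in>(Basis::'a set). b \<bullet> One)" by (simp add: inner_sum_left)
  also have "\<dots> = (\<Sum>b\<in>(Basis::'a set). 1)" by (intro sum.cong) (auto simp: inner_One_Basis)
  finally show ?thesis by (simp add: norm_eq_sqrt_inner)
qed

lemma One_inner_le: "s \<in> (unit_cube_vertices::'a::euclidean_space set) \<Longrightarrow> (One::'a) \<bullet> s \<le> real DIM('a)"
proof -
  assume s: "s \<in> unit_cube_vertices"
  have "(One::'a) \<bullet> s = (\<Sum>b\<in>(Basis::'a set). b \<bullet> s)" by (simp add: inner_sum_left)
  also have "\<dots> \<le> (\<Sum>b\<in>(Basis::'a set). 1)"
    using s by (intro sum_mono) (force simp: unit_cube_vertices_def inner_commute)
  finally show ?thesis by simp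
qed

lemma One_inner_S0: "j \<in> Basis \<Longrightarrow> (One::'a::euclidean_space) \<bullet> (One - j) = real DIM('a) - 1"
proof -
  assume j: "j \<in> Basis"
  have "(One::'a) \<bullet> One = (\<Sum>b\<in>(Basis::'a set). b \<bullet> One)" by (simp add: inner_sum_left)
  also have "\<dots> = (\<Sum>b\<in>(Basis::'a set). 1)" by (intro sum.cong) (auto simp: inner_One_Basis)
  finally have "(One::'a) \<bullet> One = real DIM('a)" by simp
  then show ?thesis using j by (simp add: inner_simps)
qed

theorem lemma1:
  shows "PWidth (unit_cube_vertices :: 'a::euclidean_space set) = 1 / sqrt (real DIM('a))"
proof -
  let ?A = "unit_cube_vertices :: 'a set"
  let ?d = "real DIM('a)"
  let ?C = "convex hull ?A"
  let ?W = "{PdirW (K \<inter> ?A) r x | K x r. K face_of convex hull ?A \<and> K \<noteq> {} \<and> x \<in> K \<and> r \<in> cone_diff K x \<and> r \<noteq> 0}"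
  have low: "\<forall>t\<in>?W. 1 / sqrt ?d \<le> t"
  proof
    fix t assume "t \<in> ?W"
    then obtain K x r where t: "t = PdirW (K \<inter> ?A) r x" and h: "K face_of convex hull ?A" "x \<in> K"
      "r \<in> cone_diff K x" "r \<noteq> 0" by blast
    show "1 / sqrt ?d \<le> t" unfolding t by (rule PdirW_lower[OF h])
  qed
  define S0 where "S0 = (\<lambda>j. One - j) ` (Basis::'a set)"
  define x0 where "x0 = One - (1/?d) *\<^sub>R (One::'a)"
  have AC: "?A \<subseteq> ?C" by (rule hull_subset)
  have CA: "?C \<inter> ?A = ?A" using AC by (rule Int_absorb1)
  have d1: "?d \<ge> 1" using DIM_positive[where 'a='a] by linarith
  have OneA: "One \<in> ?A" by (simp add: unit_cube_vertices_def)
  have x0C: "x0 \<in> ?C" unfolding hullA mem_box x0_def using d1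
    by (auto simp: inner_simps inner_One_Basis field_simps)
  have rc: "One \<in> cone_diff ?C x0"
    unfolding cone_diff_def
  proof (intro CollectI exI conjI)
    show "finite {One::'a}" by simp
    show "{One::'a} \<subseteq> ?C" using OneA AC by blast
    show "\<forall>y\<in>{One::'a}. 0 \<le> (\<lambda>_. ?d) y" by simp
    show "One = (\<Sum>y\<in>{One}. (\<lambda>_. ?d) y *\<^sub>R (y - x0))"
      using d1 by (simp add: x0_def)
  qed
  obtain b :: 'a where b: "b \<in> Basis" using nonempty_Basis by blast
  have One0: "One \<noteq> (0::'a)"
  proof
    assume "One = (0::'a)"
    then have "One \<bullet> b = (0::'a) \<bullet> b" by simp
    then show False using b by simp
  qed
  have Cface: "?C face_of ?C" by (rule face_of_refl) (rule convex_convex_hull)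
  have wit: "PdirW (?C \<inter> ?A) One x0 \<in> ?W"
    using Cface x0C rc One0 by (intro CollectI exI[of _ ?C] exI[of _ x0] exI[of _ One]) auto
  have S0A: "S0 \<subseteq> ?A"
    unfolding S0_def unit_cube_vertices_def by (auto simp: inner_simps inner_Basis split: if_splits)
  have injS0: "inj_on (\<lambda>j. (One::'a) - j) Basis" by (rule inj_onI) simp
  have cardS0: "card S0 = DIM('a)" unfolding S0_def using injS0 by (simp add: card_image)
  have sumS0: "(\<Sum>v\<in>S0. (1/?d) *\<^sub>R v) = x0"
  proof -
    have "(\<Sum>v\<in>S0. (1/?d) *\<^sub>R v) = (1/?d) *\<^sub>R (\<Sum>j\<in>Basis. (One::'a) - j)"
      unfolding S0_def using injS0 by (simp add: sum.reindex scaleR_right.sum)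
    also have "\<dots> = (1/?d) *\<^sub>R (?d *\<^sub>R One - One)"
      by (simp add: sum_subtractf sum_constant_scaleR)
    also have "\<dots> = x0" using d1 unfolding x0_def by (simp add: algebra_simps)
    finally show ?thesis .
  qed
  have S0: "S0 \<in> proper_supports (?C \<inter> ?A) x0"
    unfolding proper_supports_def CA
  proof (intro CollectI conjI exI[of _ "\<lambda>_. 1/?d"])
    show "S0 \<subseteq> ?A" by (rule S0A)
    show "\<forall>s\<in>S0. 0 < 1/?d" using d1 by simp
    show "sum (\<lambda>_. 1/?d) S0 = 1" using cardS0 d1 by simp
    show "(\<Sum>s\<in>S0. (1/?d) *\<^sub>R s) = x0" by (rule sumS0)
  qed
  have up: "Sup {((One::'a) /\<^sub>R norm (One::'a)) \<bullet> (s - v) | s v. s \<in> ?C \<inter> ?A \<and> v \<in> S0} \<le> 1 / sqrt ?d"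
  proof (rule cSup_least)
    show "{((One::'a) /\<^sub>R norm (One::'a)) \<bullet> (s - v) | s v. s \<in> ?C \<inter> ?A \<and> v \<in> S0} \<noteq> {}"
      using OneA CA b unfolding S0_def by blast
    fix t assume "t \<in> {((One::'a) /\<^sub>R norm (One::'a)) \<bullet> (s - v) | s v. s \<in> ?C \<inter> ?A \<and> v \<in> S0}"
    then obtain s j where sj: "s \<in> ?A" "j \<in> Basis" "t = ((One::'a) /\<^sub>R norm (One::'a)) \<bullet> (s - (One - j))"
      unfolding S0_def CA by blast
    have "t = ((One::'a) \<bullet> s - (One::'a) \<bullet> (One - j)) / sqrt ?d"
      using sj(3) by (simp add: norm_One' inner_simps right_diff_distrib divide_inverse_commute)
    also have "\<dots> \<le> 1 / sqrt ?d"
      using One_inner_le[OF sj(1)] One_inner_S0[OF sj(2)] d1 by (intro divide_right_mono) auto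
    finally show "t \<le> 1 / sqrt ?d" .
  qed
  have "PdirW (?C \<inter> ?A) One x0 \<le> 1 / sqrt ?d"
    unfolding PdirW_def
  proof (rule cInf_lower2)
    show "Sup {((One::'a) /\<^sub>R norm (One::'a)) \<bullet> (s - v) | s v. s \<in> ?C \<inter> ?A \<and> v \<in> S0}
      \<in> (\<lambda>S. Sup {((One::'a) /\<^sub>R norm (One::'a)) \<bullet> (s - v) | s v. s \<in> ?C \<inter> ?A \<and> v \<in> S}) ` proper_supports (?C \<inter> ?A) x0"
      using S0 by blast
    show "bdd_below ((\<lambda>S. Sup {((One::'a) /\<^sub>R norm (One::'a)) \<bullet> (s - v) | s v. s \<in> ?C \<inter> ?A \<and> v \<in> S}) ` proper_supports (?C \<inter> ?A) x0)"
      using lower[OF Cface x0C rc One0] by (intro bdd_belowI[of _ "1 / sqrt ?d"]) blast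
  qed (rule up)
  moreover have "bdd_below ?W" using low by (intro bdd_belowI[of _ "1 / sqrt ?d"]) blast
  ultimately have le: "Inf ?W \<le> 1 / sqrt ?d"
    using wit by (intro cInf_lower2[OF wit])
  have ge: "1 / sqrt ?d \<le> Inf ?W"
    using wit low by (intro cInf_greatest) auto
  show ?thesis unfolding PWidth_def using le ge by linarith
qed

end
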